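(* Let $d\ge0$, let $x\in V_d$ and $n:=\mathrm{min.deg}\,x$. Then: (1) There exists $\xi\in\mathfrak g_d^x$ with $\mathrm{min.deg}\,\xi=0$. (2) For any such $\xi$, $$\mathfrak g_d^x=\mathbb C[z]\xi+z^{d+1-n}\mathfrak g_d=\mathbb C\xi\oplus\mathbb C\xi z\oplus\cdots\oplus\mathbb C\xi z^{d-n}\oplus\mathfrak{sl}_2z^{d+1-n}\oplus\cdots\oplus\mathfrak{sl}_2z^d.$$ (3) For $s=2(d+1-n')$ with $n'=0,1,\dots,d+1$, $$(V_d)_{(s)}=\{x'\in V_d:\mathrm{min.deg}\,x'=n'\}=(T\setminus0)z^{n'}\oplus Tz^{n'+1}\oplus\cdots\oplus Tz^d,$$ and for all other values of $s$, $(V_d)_{(s)}=\emptyset$. In particular $\mathrm{mod}(\mathfrak g_d:V_d)=0$, and this value is attained by every nonempty $(V_d)_{(s)}$.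
   Context: $T=\mathbb C^2=\mathbb C\langle e_1,e_2\rangle$ with the standard symplectic form and the standard action of $\mathfrak{sl}_2=\mathfrak{sl}(T)$. $V_d=T\otimes\mathbb C[z]/(z^{d+1})$ and $\mathfrak g_d=\mathfrak{sl}_2\otimes\mathbb C[z]/(z^{d+1})$ (truncated current algebra), acting on $V_d$ by $(\xi z^a)(vz^b)=(\xi v)z^{a+b}$. For $x=x_0+x_1z+\cdots+x_dz^d$ in $V_d$ or $\mathfrak g_d$, $\mathrm{min.deg}\,x=\min\{m:x_m\ne0\}$, with $\mathrm{min.deg}\,0=d+1$. $\mathfrak g_d^x$ is the stabilizer of $x$ in $\mathfrak g_d$. $(V_d)_{(s)}$ is the set of $x\in V_d$ whose orbit under $\mathfrak g_d$ (equivalently under its adjoint group) has dimension $s$, i.e. $\dim\mathfrak g_d.x=s$. The modality is $\mathrm{mod}(\mathfrak g_d:V_d)=\max_{s\ge0}(\dim(V_d)_{(s)}-s)$. *)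

theory Defs
  imports "HOL-Analysis.Analysis" "HOL-Library.Function_Algebras"
begin

text \<open>Elements of V_d = T (x) C[z]/(z^(d+1)) are coefficient sequences
  x :: nat => complex^2 (x m = coefficient of z^m) vanishing above d.
  Elements of g_d = sl_2 (x) C[z]/(z^(d+1)) are sequences of traceless
  2x2 complex matrices vanishing above d.\<close>

type_synonym vel = "nat \<Rightarrow> complex^2"
type_synonym gel = "nat \<Rightarrow> complex^2^2"

definition Vd :: "nat \<Rightarrow> vel set" where
  "Vd d = {x. \<forall>m>d. x m = 0}"

definition sl2 :: "(complex^2^2) set" where
  "sl2 = {A. trace A = 0}"

definition gd :: "nat \<Rightarrow> gel set" where
  "gd d = {\<xi>. (\<forall>m. \<xi> m \<in> sl2) \<and> (\<forall>m>d. \<xi> m = 0)}"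

text \<open>min.deg, with min.deg 0 = d+1.\<close>
definition mindeg :: "nat \<Rightarrow> (nat \<Rightarrow> 'a::zero) \<Rightarrow> nat" where
  "mindeg d x = (if \<exists>m\<le>d. x m \<noteq> 0 then (LEAST m. m \<le> d \<and> x m \<noteq> 0) else Suc d)"

text \<open>Action (xi z^a)(v z^b) = (xi v) z^(a+b), truncated at z^(d+1).\<close>
definition act :: "nat \<Rightarrow> gel \<Rightarrow> vel \<Rightarrow> vel" where
  "act d \<xi> x = (\<lambda>m. if m \<le> d then (\<Sum>a\<le>m. \<xi> a *v x (m - a)) else 0)"

definition stab :: "nat \<Rightarrow> vel \<Rightarrow> gel set" where
  "stab d x = {\<xi> \<in> gd d. act d \<xi> x = (\<lambda>m. 0)}"

definition pmul :: "nat \<Rightarrow> (nat \<Rightarrow> complex) \<Rightarrow> gel \<Rightarrow> gel" where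
  "pmul d c \<xi> = (\<lambda>m. if m \<le> d then (\<Sum>i\<le>m. (\<chi> p q. c i * \<xi> (m - i) $ p $ q)) else 0)"

definition zmul :: "nat \<Rightarrow> nat \<Rightarrow> gel \<Rightarrow> gel" where
  "zmul d k \<xi> = (\<lambda>m. if k \<le> m \<and> m \<le> d then \<xi> (m - k) else 0)"

definition vscale :: "complex \<Rightarrow> vel \<Rightarrow> vel" where
  "vscale c x = (\<lambda>m. c *s x m)"

definition cdim :: "vel set \<Rightarrow> nat" where
  "cdim S = vector_space.dim vscale S"

definition orbit_sp :: "nat \<Rightarrow> vel \<Rightarrow> vel set" where
  "orbit_sp d x = (\<lambda>\<xi>. act d \<xi> x) ` gd d"

definition Vs :: "nat \<Rightarrow> nat \<Rightarrow> vel set" where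
  "Vs d s = {x \<in> Vd d. cdim (orbit_sp d x) = s}"

text \<open>Dimension of a (constructible) subset S of V_d: the largest k such that
  some complex-linear map V_d -> C^k (given by k linear functionals with
  coefficients a i m j) maps S onto a set with nonempty interior in C^k.
  For constructible sets this is the algebraic (Zariski) dimension.\<close>
definition lin_fun :: "nat \<Rightarrow> (nat \<Rightarrow> nat \<Rightarrow> 2 \<Rightarrow> complex) \<Rightarrow> nat \<Rightarrow> vel \<Rightarrow> complex" where
  "lin_fun d a i x = (\<Sum>m\<le>d. \<Sum>j\<in>UNIV. a i m j * x m $ j)"

definition setdim :: "nat \<Rightarrow> vel set \<Rightarrow> nat" where
  "setdim d S = Sup {k. \<exists>a c r. r > 0 \<and>
      (\<forall>w :: nat \<Rightarrow> complex. (\<forall>i<k. cmod (w i - c i) < r) \<longrightarrow>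
          (\<exists>x\<in>S. \<forall>i<k. lin_fun d a i x = w i))}"

definition modality :: "nat \<Rightarrow> int" where
  "modality d = Max ((\<lambda>s. int (setdim d (Vs d s)) - int s) ` {s. Vs d s \<noteq> {}})"

end

theory Submission
  imports Defs
begin


lemma vec2_eq: "(u::'a^2) = v \<longleftrightarrow> u$1 = v$1 \<and> u$2 = v$2"
  by (metis (mono_tags) exhaust_2 vec_eq_iff)

lemma mv2: "(A::complex^2^2) *v v = (\<chi> i. A$i$1 * v$1 + A$i$2 * v$2)"
  by (simp add: matrix_vector_mult_def sum_2)

lemma trace2: "trace (A::complex^2^2) = A$1$1 + A$2$2"
  by (simp add: trace_def sum_2)

lemma mat_eq2: "(A::complex^2^2) = B \<longleftrightarrow> A$1$1 = B$1$1 \<and> A$1$2 = B$1$2 \<and> A$2$1 = B$2$1 \<and> A$2$2 = B$2$2"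
  by (metis vec2_eq)

definition Kv :: "complex^2 \<Rightarrow> complex^2^2" where
  "Kv v = (\<chi> p q. if p = 1 then (if q = 1 then v$1 * v$2 else - v$1 * v$1) else (if q = 1 then v$2 * v$2 else - v$1 * v$2))"

lemma sl2_ker_Kv:
  fixes A :: "complex^2^2"
  assumes "A \<in> sl2" "A *v v = 0" "v \<noteq> 0"
  shows "\<exists>\<mu>. A = (\<chi> p q. \<mu> * Kv v$p$q)"
proof -
  have tA: "A$2$2 = - A$1$1" using assms(1) by (auto simp: sl2_def trace2 add_eq_0_iff)
  have a1: "A$1$1 * v$1 + A$1$2 * v$2 = 0" "A$2$1 * v$1 + A$2$2 * v$2 = 0"
    using assms(2) by (auto simp: mv2 vec2_eq)
  have vn: "v$1 \<noteq> 0 \<or> v$2 \<noteq> 0" using assms(3) by (auto simp: vec2_eq)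
  show ?thesis
  proof (cases "v$1 = 0")
    case True
    then have v2: "v$2 \<noteq> 0" using vn by auto
    have "A$1$2 = 0" "A$2$2 = 0" using a1 True v2 by auto
    then have "A$1$1 = 0" using tA by auto
    then show ?thesis using \<open>A$1$2 = 0\<close> \<open>A$2$2 = 0\<close> True v2
      by (intro exI[of _ "A$2$1 / (v$2 * v$2)"]) (auto simp: mat_eq2 Kv_def)
  next
    case False
    have A11: "A$1$1 = - A$1$2 * v$2 / v$1" using a1(1) False by (auto simp: field_simps eq_neg_iff_add_eq_0)
    have A21: "A$2$1 = A$1$1 * v$2 / v$1" using a1(2) tA False by (auto simp: field_simps)
    have e: "v$1 * A$1$1 = - (v$2 * A$1$2)" using a1(1) by (simp add: eq_neg_iff_add_eq_0 mult.commute)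
    have e2: "v$1 * (v$2 * A$1$1) = - (v$2 * (v$2 * A$1$2))" by (metis e mult.left_commute mult_minus_right)
    show ?thesis using A11 A21 tA False e2
      by (intro exI[of _ "- A$1$2 / (v$1 * v$1)"]) (auto simp: mat_eq2 Kv_def field_simps)
  qed
qed

lemma sl2_kernel_prop:
  fixes A B :: "complex^2^2"
  assumes "A \<in> sl2" "B \<in> sl2" "A *v v = 0" "B *v v = 0" "v \<noteq> 0" "B \<noteq> 0"
  shows "\<exists>l. A = (\<chi> p q. l * B$p$q)"
proof -
  obtain a where a: "A = (\<chi> p q. a * Kv v$p$q)" using sl2_ker_Kv assms by blast
  obtain b where b: "B = (\<chi> p q. b * Kv v$p$q)" using sl2_ker_Kv assms by blast
  have "b \<noteq> 0" using assms(6) b by (auto simp: vec_eq_iff)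
  then show ?thesis using a b by (intro exI[of _ "a / b"]) (auto simp: vec_eq_iff)
qed

lemma sl2_surj:
  fixes v w :: "complex^2"
  assumes "v \<noteq> 0"
  shows "\<exists>A\<in>sl2. A *v v = w"
proof (cases "v$1 = 0")
  case True
  then have v2: "v$2 \<noteq> 0" using assms by (auto simp: vec2_eq)
  define A :: "complex^2^2" where "A = (\<chi> p q. if p = 1 then (if q = 1 then - w$2/v$2 else w$1/v$2) else (if q = 1 then 0 else w$2/v$2))"
  have "A \<in> sl2" by (simp add: A_def sl2_def trace2)
  moreover have "A *v v = w" using True v2 by (simp add: A_def mv2 vec2_eq)
  ultimately show ?thesis by blast
next
  case False
  define A :: "complex^2^2" where "A = (\<chi> p q. if p = 1 then (if q = 1 then w$1/v$1 else 0) else (if q = 1 then (w$2 + w$1 * v$2 / v$1)/v$1 else - w$1/v$1))"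
  have "A \<in> sl2" by (simp add: A_def sl2_def trace2)
  moreover have "A *v v = w" using False by (simp add: A_def mv2 vec2_eq field_simps)
  ultimately show ?thesis by blast
qed

lemma sl2_ker:
  fixes v :: "complex^2"
  assumes "v \<noteq> 0"
  shows "\<exists>B\<in>sl2. B \<noteq> 0 \<and> B *v v = 0"
proof -
  define B :: "complex^2^2" where "B = (\<chi> p q. if p = 1 then (if q = 1 then v$1 * v$2 else - v$1 * v$1) else (if q = 1 then v$2 * v$2 else - v$1 * v$2))"
  have "B \<in> sl2" by (simp add: B_def sl2_def trace2)
  moreover have "B *v v = 0" by (simp add: B_def mv2 vec2_eq algebra_simps)
  moreover have "B \<noteq> 0" using assms by (auto simp: B_def mat_eq2 vec2_eq)
  ultimately show ?thesis by blast
qed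



lemma mindeg_le: "mindeg d x \<le> Suc d"
proof (cases "\<exists>m\<le>d. x m \<noteq> 0")
  case True
  then obtain m where "m \<le> d" "x m \<noteq> 0" by auto
  then have "(LEAST m. m \<le> d \<and> x m \<noteq> 0) \<le> m" by (intro Least_le) auto
  then show ?thesis using True \<open>m \<le> d\<close> by (simp add: mindeg_def)
next
  case False then show ?thesis unfolding mindeg_def by (simp only: if_False)
qed

lemma mindeg_below: "m < mindeg d x \<Longrightarrow> x m = 0"
proof (cases "\<exists>m\<le>d. x m \<noteq> 0")
  case True
  assume m: "m < mindeg d x"
  then have "m < (LEAST m. m \<le> d \<and> x m \<noteq> 0)" using True by (simp add: mindeg_def)
  then have "\<not> (m \<le> d \<and> x m \<noteq> 0)" by (rule not_less_Least)
  moreover have "m \<le> d" using m mindeg_le[of d x] by simp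
  ultimately show ?thesis by simp
next
  case False
  assume m: "m < mindeg d x"
  then have "m \<le> d" using mindeg_le[of d x] by simp
  then show ?thesis using False by auto
qed

lemma mindeg_nz: "mindeg d x \<le> d \<Longrightarrow> x (mindeg d x) \<noteq> 0"
proof (cases "\<exists>m\<le>d. x m \<noteq> 0")
  case True
  have "(LEAST m. m \<le> d \<and> x m \<noteq> 0) \<le> d \<and> x (LEAST m. m \<le> d \<and> x m \<noteq> 0) \<noteq> 0"
    by (rule LeastI_ex) (rule True)
  moreover have "mindeg d x = (LEAST m. m \<le> d \<and> x m \<noteq> 0)" using True unfolding mindeg_def by (simp only: if_True)
  ultimately show ?thesis by simp
next
  case False
  assume "mindeg d x \<le> d"
  moreover have "mindeg d x = Suc d" using False unfolding mindeg_def by (simp only: if_False)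
  ultimately show ?thesis by simp
qed

lemma mindeg_eqI:
  assumes "n' \<le> Suc d" "\<forall>m<n'. x m = 0" "n' \<le> d \<longrightarrow> x n' \<noteq> 0"
  shows "mindeg d x = n'"
proof -
  have "\<not> mindeg d x < n'"
  proof
    assume h: "mindeg d x < n'"
    then have "mindeg d x \<le> d" using assms(1) by simp
    then show False using mindeg_nz[of d x] assms(2) h by simp
  qed
  moreover have "\<not> n' < mindeg d x"
  proof
    assume h: "n' < mindeg d x"
    then have "n' \<le> d" using mindeg_le[of d x] by simp
    then show False using mindeg_below[OF h] assms(3) by simp
  qed
  ultimately show ?thesis by simp
qed

lemma mindeg0: "mindeg d x = 0 \<longleftrightarrow> x 0 \<noteq> 0"
proof
  assume "mindeg d x = 0" then show "x 0 \<noteq> 0" using mindeg_nz[of d x] by simp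
next
  assume "x 0 \<noteq> 0" then show "mindeg d x = 0" by (intro mindeg_eqI) auto
qed

lemma Vd_mindeg: "x \<in> Vd d \<Longrightarrow> mindeg d x = Suc d \<Longrightarrow> x = 0"
proof -
  assume a: "x \<in> Vd d" "mindeg d x = Suc d"
  show "x = 0"
  proof
    fix m show "x m = 0 m"
    proof (cases "m \<le> d")
      case True then show ?thesis using mindeg_below[of m d x] a by simp
    next
      case False then show ?thesis using a by (simp add: Vd_def)
    qed
  qed
qed

lemma sl2_add: "A \<in> sl2 \<Longrightarrow> B \<in> sl2 \<Longrightarrow> A + B \<in> sl2"
proof -
  assume "A \<in> sl2" "B \<in> sl2"
  moreover have "(A+B)$1$1 + (A+B)$2$2 = (A$1$1 + A$2$2) + (B$1$1 + B$2$2)" by (simp add: algebra_simps)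
  ultimately show ?thesis by (simp add: sl2_def trace2)
qed
lemma sl2_diff: "A \<in> sl2 \<Longrightarrow> B \<in> sl2 \<Longrightarrow> A - B \<in> sl2"
proof -
  assume "A \<in> sl2" "B \<in> sl2"
  moreover have "(A-B)$1$1 + (A-B)$2$2 = (A$1$1 + A$2$2) - (B$1$1 + B$2$2)" by (simp add: algebra_simps)
  ultimately show ?thesis by (simp add: sl2_def trace2)
qed
lemma sl2_0: "0 \<in> sl2" by (simp add: sl2_def trace2)

lemma gd_add: "\<xi> \<in> gd d \<Longrightarrow> \<eta> \<in> gd d \<Longrightarrow> \<xi> + \<eta> \<in> gd d"
  by (simp add: gd_def sl2_add)
lemma gd_diff: "\<xi> \<in> gd d \<Longrightarrow> \<eta> \<in> gd d \<Longrightarrow> \<xi> - \<eta> \<in> gd d"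
  by (simp add: gd_def sl2_diff)
lemma gd_0: "0 \<in> gd d" by (simp add: gd_def sl2_0)

lemma act_add: "act d (\<xi> + \<eta>) x = act d \<xi> x + act d \<eta> x"
  by (simp add: act_def fun_eq_iff matrix_vector_mult_add_rdistrib sum.distrib)
lemma act_diff: "act d (\<xi> - \<eta>) x = act d \<xi> x - act d \<eta> x"
  by (simp add: act_def fun_eq_iff matrix_vector_mult_diff_rdistrib sum_subtractf)
lemma act_0: "act d 0 x = 0"
  by (simp add: act_def fun_eq_iff)

lemma sum_single:
  assumes "finite A" "j \<in> A" "\<And>a. a \<in> A \<Longrightarrow> a \<noteq> j \<Longrightarrow> f a = 0"
  shows "sum f A = f j"
proof -
  have "sum f A = f j + sum f (A - {j})" using assms by (simp add: sum.remove)
  also have "sum f (A - {j}) = 0" using assms by (intro sum.neutral) auto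
  finally show ?thesis by simp
qed

lemma act_low:
  assumes "\<forall>a<j. \<xi> a = 0" "\<forall>m<n. x m = 0" "m < n + j"
  shows "act d \<xi> x m = 0"
  unfolding act_def
proof (simp, intro impI sum.neutral ballI)
  fix a assume "a \<in> {..m}"
  show "\<xi> a *v x (m - a) = 0"
  proof (cases "a < j")
    case True then show ?thesis using assms by simp
  next
    case False then have "m - a < n" using assms(3) \<open>a \<in> {..m}\<close> by auto
    then show ?thesis using assms by simp
  qed
qed

lemma act_lead:
  assumes "\<forall>a<j. \<xi> a = 0" "\<forall>m<n. x m = 0" "n + j \<le> d"
  shows "act d \<xi> x (n + j) = \<xi> j *v x n"
proof -
  have "(\<Sum>a\<le>n+j. \<xi> a *v x (n + j - a)) = \<xi> j *v x (n + j - j)"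
    proof (rule sum_single)
    fix a assume "a \<in> {..n+j}" "a \<noteq> j"
    show "\<xi> a *v x (n + j - a) = 0"
    proof (cases "a < j")
      case True then show ?thesis using assms by simp
    next
      case False then have "n + j - a < n" using \<open>a \<noteq> j\<close> \<open>a \<in> {..n+j}\<close> by auto
      then show ?thesis using assms by simp
    qed
  qed auto
  then show ?thesis using assms by (simp add: act_def)
qed

lemma act_single: "act d (\<lambda>a. if a = j then A else 0) x = (\<lambda>m. if j \<le> m \<and> m \<le> d then A *v x (m - j) else 0)"
proof -
  have e: "(if a = j then A else 0) *v y = (if a = j then A *v y else 0)" for a y by simp
  show ?thesis unfolding act_def e by (auto simp: fun_eq_iff)
qed



lemma solve:
  assumes x0: "\<forall>m<n. x m = 0" and xn: "n \<le> d \<longrightarrow> x n \<noteq> 0" and nd: "n \<le> Suc d"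
  shows "j + t = Suc d - n \<Longrightarrow> \<forall>m. (m < n + j \<or> m > d) \<longrightarrow> v m = 0 \<Longrightarrow>
     \<exists>\<xi>\<in>gd d. (\<forall>a<j. \<xi> a = 0) \<and> act d \<xi> x = v"
proof (induction t arbitrary: j v)
  case 0
  then have "v = 0" using nd by (auto simp: fun_eq_iff)
  then show ?case using gd_0 act_0 by (intro bexI[of _ 0]) (auto simp: zero_fun_def)
next
  case (Suc t)
  then have njd: "n + j \<le> d" by auto
  then have "x n \<noteq> 0" using xn by auto
  then obtain A where A: "A \<in> sl2" "A *v x n = v (n + j)" using sl2_surj by blast
  define \<xi>1 where "\<xi>1 = (\<lambda>a. if a = j then A else 0)"
  have g1: "\<xi>1 \<in> gd d" using A njd by (auto simp: gd_def \<xi>1_def sl2_0)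
  have a1: "act d \<xi>1 x = (\<lambda>m. if j \<le> m \<and> m \<le> d then A *v x (m - j) else 0)"
    unfolding \<xi>1_def by (rule act_single)
  define v' where "v' = v - act d \<xi>1 x"
  have "\<forall>m. (m < n + Suc j \<or> m > d) \<longrightarrow> v' m = 0"
  proof (intro allI impI)
    fix m assume m: "m < n + Suc j \<or> m > d"
    show "v' m = 0"
    proof (cases "m = n + j")
      case True then show ?thesis using A njd by (simp add: v'_def a1)
    next
      case False
      then have "m < n + j \<or> m > d" using m by auto
      moreover have "m < n + j \<Longrightarrow> j \<le> m \<Longrightarrow> x (m - j) = 0" using x0 by auto
      ultimately show ?thesis using Suc.prems(2) by (auto simp: v'_def a1)
    qed
  qed
  then obtain \<xi>' where x': "\<xi>' \<in> gd d" "\<forall>a<Suc j. \<xi>' a = 0" "act d \<xi>' x = v'"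
    using Suc.IH[of "Suc j" v'] Suc.prems(1) by auto
  show ?case
  proof (intro bexI[of _ "\<xi>1 + \<xi>'"] conjI)
    show "\<xi>1 + \<xi>' \<in> gd d" using g1 x' gd_add by blast
    show "\<forall>a<j. (\<xi>1 + \<xi>') a = 0" using x' by (auto simp: \<xi>1_def)
    show "act d (\<xi>1 + \<xi>') x = v" using x' by (simp add: act_add v'_def)
  qed
qed

lemma stab_exists:
  assumes "x \<in> Vd d"
  shows "\<exists>\<xi>\<in>stab d x. mindeg d \<xi> = 0"
proof -
  let ?n = "mindeg d x"
  have x0: "\<forall>m<?n. x m = 0" using mindeg_below by blast
  show ?thesis
  proof (cases "?n \<le> d")
    case True
    then have xn: "x ?n \<noteq> 0" by (rule mindeg_nz)
    then obtain B where B: "B \<in> sl2" "B \<noteq> 0" "B *v x ?n = 0" using sl2_ker by blast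
    define \<xi>1 where "\<xi>1 = (\<lambda>a::nat. if a = 0 then B else (0::complex^2^2))"
    have g1: "\<xi>1 \<in> gd d" using B by (auto simp: gd_def \<xi>1_def sl2_0)
    have a1: "act d \<xi>1 x = (\<lambda>m. if 0 \<le> m \<and> m \<le> d then B *v x (m - 0) else 0)"
      unfolding \<xi>1_def by (rule act_single)
    have "\<forall>m. (m < ?n + 1 \<or> m > d) \<longrightarrow> act d \<xi>1 x m = 0"
      using x0 B by (auto simp: a1 less_Suc_eq)
    then obtain \<xi>' where x': "\<xi>' \<in> gd d" "\<forall>a<1. \<xi>' a = 0" "act d \<xi>' x = act d \<xi>1 x"
    proof -
      have "Suc (d - ?n) = Suc d - ?n" using True by simp
      then show ?thesis using that solve[of ?n x d 1 "d - ?n" "act d \<xi>1 x"] x0 xn True \<open>\<forall>m. (m < ?n + 1 \<or> m > d) \<longrightarrow> act d \<xi>1 x m = 0\<close> by auto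
    qed
    show ?thesis
    proof (intro bexI[of _ "\<xi>1 - \<xi>'"])
      show "mindeg d (\<xi>1 - \<xi>') = 0" using x' B by (simp add: mindeg0 \<xi>1_def)
      show "\<xi>1 - \<xi>' \<in> stab d x" using x' g1 by (simp add: stab_def gd_diff act_diff zero_fun_def)
    qed
  next
    case False
    then have "x = 0" using Vd_mindeg[OF assms] mindeg_le[of d x] by simp
    obtain B where B: "B \<in> sl2" "B \<noteq> 0" "B *v (axis 1 1 :: complex^2) = 0"
      using sl2_ker[of "axis 1 1"] by (auto simp: axis_eq_0_iff)
    define \<xi>1 where "\<xi>1 = (\<lambda>a::nat. if a = 0 then B else (0::complex^2^2))"
    have g1: "\<xi>1 \<in> gd d" using B by (auto simp: gd_def \<xi>1_def sl2_0)
    show ?thesis using g1 B \<open>x = 0\<close> by (intro bexI[of _ \<xi>1]) (auto simp: stab_def act_def mindeg0 \<xi>1_def fun_eq_iff)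
  qed
qed

definition Wn :: "nat \<Rightarrow> nat \<Rightarrow> vel set" where
  "Wn d n = {v. \<forall>m. (m < n \<or> m > d) \<longrightarrow> v m = 0}"

lemma orbit_Wn:
  assumes "x \<in> Vd d"
  shows "orbit_sp d x = Wn d (mindeg d x)"
proof -
  let ?n = "mindeg d x"
  have x0: "\<forall>m<?n. x m = 0" using mindeg_below by blast
  show ?thesis
  proof
    show "orbit_sp d x \<subseteq> Wn d ?n"
      using act_low[of 0 _ ?n x] x0 by (auto simp: orbit_sp_def Wn_def act_def)
    show "Wn d ?n \<subseteq> orbit_sp d x"
    proof
      fix v assume "v \<in> Wn d ?n"
      then obtain \<xi> where "\<xi> \<in> gd d" "act d \<xi> x = v"
        using solve[of ?n x d 0 "Suc d - ?n" v] x0 mindeg_nz[of d x] mindeg_le[of d x]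
        by (auto simp: Wn_def)
      then show "v \<in> orbit_sp d x" by (auto simp: orbit_sp_def)
    qed
  qed
qed



lemma tri:
  fixes F :: "nat \<Rightarrow> nat \<Rightarrow> nat \<Rightarrow> 'a::comm_monoid_add"
  shows "(\<Sum>a\<le>m. \<Sum>i\<le>a. F i (a-i) (m-a)) = (\<Sum>i\<le>m. \<Sum>b\<le>m-i. F i b (m-i-b))"
proof -
  have "(\<Sum>i\<le>m. \<Sum>b\<le>m-i. F i b (m-i-b)) = (\<Sum>(i,b)\<in>(SIGMA i:{..m}. {..m-i}). F i b (m-i-b))"
    by (rule sum.Sigma) auto
  also have "(SIGMA i:{..m}. {..m-i}) = {(i,b). i + b \<le> m}" by auto
  also have "(\<Sum>(i,b)\<in>{(i,b). i + b \<le> m}. F i b (m-i-b)) = (\<Sum>k\<le>m. \<Sum>i\<le>k. F i (k-i) (m-i-(k-i)))"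
    by (rule sum.triangle_reindex_eq)
  also have "\<dots> = (\<Sum>a\<le>m. \<Sum>i\<le>a. F i (a-i) (m-a))"
    by (intro sum.cong refl) auto
  finally show ?thesis by simp
qed

definition sc :: "complex \<Rightarrow> complex^2^2 \<Rightarrow> complex^2^2" where
  "sc c M = (\<chi> p q. c * M$p$q)"

lemma sc_mv: "sc c M *v v = c *s (M *v v)"
  by (simp add: sc_def mv2 vec_eq_iff algebra_simps)

lemma sl2_sc: "M \<in> sl2 \<Longrightarrow> sc c M \<in> sl2"
proof -
  assume "M \<in> sl2"
  moreover have "(sc c M)$1$1 + (sc c M)$2$2 = c * (M$1$1 + M$2$2)" by (simp add: sc_def algebra_simps)
  ultimately show ?thesis by (simp add: sl2_def trace2)
qed

lemma sl2_sum: "finite A \<Longrightarrow> (\<And>i. i \<in> A \<Longrightarrow> f i \<in> sl2) \<Longrightarrow> sum f A \<in> sl2"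
  by (induction A rule: finite_induct) (auto intro: sl2_add sl2_0)

lemma pmul_eq: "pmul d c \<xi> = (\<lambda>m. if m \<le> d then (\<Sum>i\<le>m. sc (c i) (\<xi> (m - i))) else 0)"
  unfolding pmul_def sc_def ..

lemma pmul_gd: "\<xi> \<in> gd d \<Longrightarrow> pmul d c \<xi> \<in> gd d"
  unfolding pmul_eq gd_def by (auto intro!: sl2_sum sl2_sc sl2_0)

lemma mv_sum: "(\<Sum>i\<in>A. f i) *v v = (\<Sum>i\<in>A. f i *v v)"
  by (induction A rule: infinite_finite_induct) (auto simp: matrix_vector_mult_add_rdistrib)

lemma act_pmul:
  assumes "m \<le> d"
  shows "act d (pmul d c \<xi>) x m = (\<Sum>i\<le>m. c i *s act d \<xi> x (m - i))"
proof -
  have "act d (pmul d c \<xi>) x m = (\<Sum>a\<le>m. \<Sum>i\<le>a. c i *s (\<xi> (a - i) *v x (m - a)))"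
    using assms by (auto simp: act_def pmul_eq mv_sum sc_mv intro!: sum.cong)
  also have "\<dots> = (\<Sum>i\<le>m. \<Sum>b\<le>m-i. c i *s (\<xi> b *v x (m - i - b)))"
    by (rule tri[where F = "\<lambda>i b e. c i *s (\<xi> b *v x e)"])
  also have "\<dots> = (\<Sum>i\<le>m. c i *s act d \<xi> x (m - i))"
    using assms by (auto simp: act_def sum_cmul intro!: sum.cong) 
  finally show ?thesis .
qed

lemma pmul_stab: "\<xi> \<in> stab d x \<Longrightarrow> pmul d c \<xi> \<in> stab d x"
  unfolding stab_def using pmul_gd act_pmul by (auto simp: fun_eq_iff act_def)

lemma stab_add: "\<xi> \<in> stab d x \<Longrightarrow> \<eta> \<in> stab d x \<Longrightarrow> \<xi> + \<eta> \<in> stab d x"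
  by (simp add: stab_def gd_add act_add zero_fun_def[symmetric])
lemma stab_diff: "\<xi> \<in> stab d x \<Longrightarrow> \<eta> \<in> stab d x \<Longrightarrow> \<xi> - \<eta> \<in> stab d x"
  by (simp add: stab_def gd_diff act_diff zero_fun_def[symmetric])

lemma high_stab:
  assumes "\<zeta> \<in> gd d" "\<forall>j. j + n \<le> d \<longrightarrow> \<zeta> j = 0" "\<forall>m<n. x m = 0"
  shows "\<zeta> \<in> stab d x"
proof -
  have "act d \<zeta> x m = 0" for m
    unfolding act_def
  proof (simp, intro impI sum.neutral ballI)
    fix a assume "m \<le> d" "a \<in> {..m}"
    show "\<zeta> a *v x (m - a) = 0"
    proof (cases "a + n \<le> d")
      case True then show ?thesis using assms by simp
    next
      case False then have "m - a < n" using \<open>m \<le> d\<close> \<open>a \<in> {..m}\<close> by auto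
      then show ?thesis using assms by simp
    qed
  qed
  then show ?thesis using assms by (simp add: stab_def fun_eq_iff)
qed

lemma pmul_uniq:
  assumes "\<xi> 0 \<noteq> 0" "K \<le> d" "\<forall>m\<le>K. pmul d c \<xi> m = pmul d c' \<xi> m"
  shows "\<forall>i\<le>K. c i = c' i"
proof -
  have "i \<le> K \<longrightarrow> c i = c' i" for i
  proof (induction i rule: less_induct)
    case (less i)
    show ?case
    proof
      assume iK: "i \<le> K"
      have "(\<Sum>j\<le>i. sc (c j) (\<xi> (i - j))) = (\<Sum>j\<le>i. sc (c' j) (\<xi> (i - j)))"
        using assms(3) iK assms(2) by (simp add: pmul_eq)
      moreover have "(\<Sum>j\<le>i. sc (c j) (\<xi> (i - j))) = (\<Sum>j<i. sc (c j) (\<xi> (i - j))) + sc (c i) (\<xi> 0)"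
        by (simp add: lessThan_Suc_atMost[symmetric])
      moreover have "(\<Sum>j\<le>i. sc (c' j) (\<xi> (i - j))) = (\<Sum>j<i. sc (c' j) (\<xi> (i - j))) + sc (c' i) (\<xi> 0)"
        by (simp add: lessThan_Suc_atMost[symmetric])
      moreover have "(\<Sum>j<i. sc (c j) (\<xi> (i - j))) = (\<Sum>j<i. sc (c' j) (\<xi> (i - j)))"
        using less.IH iK by (intro sum.cong) auto
      ultimately have "sc (c i) (\<xi> 0) = sc (c' i) (\<xi> 0)" by simp
      then have "\<forall>p q. (c i - c' i) * \<xi> 0 $ p $ q = 0" by (auto simp: sc_def vec_eq_iff algebra_simps)
      moreover obtain p q where "\<xi> 0 $ p $ q \<noteq> 0" using assms(1) by (auto simp: vec_eq_iff)
      ultimately show "c i = c' i" by auto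
    qed
  qed
  then show ?thesis by blast
qed

lemma construct:
  assumes xi: "\<xi> \<in> stab d x" "\<xi> 0 \<noteq> 0" and eta: "\<eta> \<in> stab d x"
    and x0: "\<forall>m<n. x m = 0" and xn: "x n \<noteq> 0"
  shows "j + n \<le> d \<Longrightarrow> \<exists>c. (\<forall>i>j. c i = 0) \<and> (\<forall>m\<le>j. \<eta> m = pmul d c \<xi> m)"
proof (induction j)
  case 0
  have "act d \<eta> x (n + 0) = \<eta> 0 *v x n" using act_lead[of 0 \<eta> n x d] x0 0 by simp
  then have e0: "\<eta> 0 *v x n = 0" using eta by (simp add: stab_def)
  have "act d \<xi> x (n + 0) = \<xi> 0 *v x n" using act_lead[of 0 \<xi> n x d] x0 0 by simp
  then have x0': "\<xi> 0 *v x n = 0" using xi by (simp add: stab_def)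
  obtain l where l: "\<eta> 0 = sc l (\<xi> 0)"
    using sl2_kernel_prop[of "\<eta> 0" "\<xi> 0" "x n"] e0 x0' xi eta xn
    by (auto simp: stab_def gd_def sc_def)
  show ?case using l 0 by (intro exI[of _ "\<lambda>i. if i = 0 then l else 0"]) (auto simp: pmul_eq)
next
  case (Suc j)
  then obtain c where c: "\<forall>i>j. c i = 0" "\<forall>m\<le>j. \<eta> m = pmul d c \<xi> m" by auto
  define \<eta>' where "\<eta>' = \<eta> - pmul d c \<xi>"
  have st: "\<eta>' \<in> stab d x" unfolding \<eta>'_def by (intro stab_diff eta pmul_stab xi)
  have low: "\<forall>a<Suc j. \<eta>' a = 0" using c by (auto simp: \<eta>'_def)
  have "act d \<eta>' x (n + Suc j) = \<eta>' (Suc j) *v x n" using act_lead[OF low x0] Suc by simp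
  then have e0: "\<eta>' (Suc j) *v x n = 0" using st by (simp add: stab_def)
  have "act d \<xi> x (n + 0) = \<xi> 0 *v x n" using act_lead[of 0 \<xi> n x d] x0 Suc by simp
  then have x0': "\<xi> 0 *v x n = 0" using xi by (simp add: stab_def)
  obtain l where l: "\<eta>' (Suc j) = sc l (\<xi> 0)"
    using sl2_kernel_prop[of "\<eta>' (Suc j)" "\<xi> 0" "x n"] e0 x0' xi st xn
    by (auto simp: stab_def gd_def sc_def)
  define c' where "c' = c(Suc j := l)"
  have pm: "pmul d c' \<xi> m = pmul d c \<xi> m" if "m \<le> j" for m
    using that by (auto simp: pmul_eq c'_def intro!: sum.cong)
  have "pmul d c' \<xi> (Suc j) = pmul d c \<xi> (Suc j) + sc l (\<xi> 0)"
  proof -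
    have "pmul d c' \<xi> (Suc j) = (\<Sum>i<Suc j. sc (c' i) (\<xi> (Suc j - i))) + sc (c' (Suc j)) (\<xi> 0)"
      using Suc.prems by (simp add: pmul_eq lessThan_Suc_atMost[symmetric])
    also have "(\<Sum>i<Suc j. sc (c' i) (\<xi> (Suc j - i))) = (\<Sum>i<Suc j. sc (c i) (\<xi> (Suc j - i)))"
      by (intro sum.cong) (auto simp: c'_def)
    also have "\<dots> = pmul d c \<xi> (Suc j) - sc (c (Suc j)) (\<xi> 0)"
      using Suc.prems by (simp add: pmul_eq lessThan_Suc_atMost[symmetric])
    finally have "pmul d c' \<xi> (Suc j) = pmul d c \<xi> (Suc j) - sc (c (Suc j)) (\<xi> 0) + sc (c' (Suc j)) (\<xi> 0)" .
    moreover have "sc (c (Suc j)) (\<xi> 0) = 0" using c by (simp add: sc_def vec_eq_iff)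
    moreover have "c' (Suc j) = l" by (simp add: c'_def)
    ultimately show ?thesis by simp
  qed
  moreover have "\<eta> (Suc j) - pmul d c \<xi> (Suc j) = sc l (\<xi> 0)" using l by (simp add: \<eta>'_def)
  ultimately have "pmul d c' \<xi> (Suc j) = \<eta> (Suc j)" by (metis diff_add_cancel add.commute)
  moreover have "\<forall>i>Suc j. c' i = 0" using c by (simp add: c'_def)
  ultimately show ?case using c pm by (intro exI[of _ c']) (auto simp: le_Suc_eq)
qed



lemma pmul_zero: "pmul d (\<lambda>i. 0) \<xi> = 0"
  by (simp add: pmul_eq sc_def fun_eq_iff vec_eq_iff zero_vec_def)

lemma repr:
  assumes x: "x \<in> Vd d" and nd: "n = mindeg d x" and xi: "\<xi> \<in> stab d x" "\<xi> 0 \<noteq> 0"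
    and eta: "\<eta> \<in> stab d x"
  shows "\<exists>c \<zeta>. (\<forall>i. n + i > d \<longrightarrow> c i = 0) \<and> (\<forall>j. \<zeta> j \<in> sl2)
            \<and> (\<forall>j. (j + n \<le> d \<or> j > d) \<longrightarrow> \<zeta> j = 0) \<and> \<eta> = (\<lambda>m. pmul d c \<xi> m + \<zeta> m)"
proof (cases "n \<le> d")
  case True
  have x0: "\<forall>m<n. x m = 0" using mindeg_below nd by blast
  have xn: "x n \<noteq> 0" using mindeg_nz True nd by blast
  obtain c where c: "\<forall>i>d-n. c i = 0" "\<forall>m\<le>d-n. \<eta> m = pmul d c \<xi> m"
    using construct[OF xi eta x0 xn, of "d - n"] True by auto
  define \<zeta> where "\<zeta> = \<eta> - pmul d c \<xi>"
  have g: "\<zeta> \<in> gd d" unfolding \<zeta>_def using eta xi pmul_gd gd_diff by (auto simp: stab_def)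
  show ?thesis
  proof (intro exI conjI)
    show "\<forall>i. n + i > d \<longrightarrow> c i = 0" using c True by auto
    show "\<forall>j. \<zeta> j \<in> sl2" using g by (simp add: gd_def)
    show "\<forall>j. (j + n \<le> d \<or> j > d) \<longrightarrow> \<zeta> j = 0" using g c by (auto simp: gd_def \<zeta>_def)
    show "\<eta> = (\<lambda>m. pmul d c \<xi> m + \<zeta> m)" by (simp add: \<zeta>_def fun_eq_iff)
  qed
next
  case False
  show ?thesis
  proof (intro exI conjI)
    show "\<forall>i. n + i > d \<longrightarrow> (\<lambda>i. 0::complex) i = 0" by simp
    show "\<forall>j. \<eta> j \<in> sl2" using eta by (simp add: stab_def gd_def)
    show "\<forall>j. (j + n \<le> d \<or> j > d) \<longrightarrow> \<eta> j = 0" using eta False by (auto simp: stab_def gd_def)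
    show "\<eta> = (\<lambda>m. pmul d (\<lambda>i. 0) \<xi> m + \<eta> m)" by (simp add: pmul_zero)
  qed
qed

lemma repr_uniq:
  assumes nd: "n \<le> Suc d" and xi: "\<xi> 0 \<noteq> 0"
    and c: "\<forall>i. n + i > d \<longrightarrow> c i = 0" "\<forall>j. (j + n \<le> d \<or> j > d) \<longrightarrow> \<zeta> j = 0"
    and c': "\<forall>i. n + i > d \<longrightarrow> c' i = 0" "\<forall>j. (j + n \<le> d \<or> j > d) \<longrightarrow> \<zeta>' j = 0"
    and eq: "(\<lambda>m. pmul d c \<xi> m + \<zeta> m) = (\<lambda>m. pmul d c' \<xi> m + \<zeta>' m)"
  shows "c = c' \<and> \<zeta> = \<zeta>'"
proof -
  have cc: "c = c'"
  proof (cases "n \<le> d")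
    case True
    have "\<forall>m\<le>d-n. pmul d c \<xi> m = pmul d c' \<xi> m"
    proof (intro allI impI)
      fix m assume "m \<le> d - n"
      then have "\<zeta> m = 0" "\<zeta>' m = 0" using c c' True by auto
      then show "pmul d c \<xi> m = pmul d c' \<xi> m" using fun_cong[OF eq, of m] by simp
    qed
    then have "\<forall>i\<le>d-n. c i = c' i" using pmul_uniq[of \<xi> "d-n" d c c'] xi True by auto
    show ?thesis
    proof
      fix i show "c i = c' i"
      proof (cases "i \<le> d - n")
        case True then show ?thesis using \<open>\<forall>i\<le>d-n. c i = c' i\<close> by simp
      next
        case False then have "n + i > d" by simp
        then show ?thesis using c(1) c'(1) by simp
      qed
    qed
  next
    case False
    show ?thesis
    proof
      fix i show "c i = c' i" using False c(1) c'(1) by simp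
    qed
  qed
  moreover have "\<zeta> = \<zeta>'"
  proof
    fix m show "\<zeta> m = \<zeta>' m" using fun_cong[OF eq, of m] cc by simp
  qed
  ultimately show ?thesis by simp
qed

lemma repr_stab:
  assumes x: "x \<in> Vd d" and nd: "n = mindeg d x" and xi: "\<xi> \<in> stab d x"
    and c: "\<forall>j. \<zeta> j \<in> sl2" "\<forall>j. (j + n \<le> d \<or> j > d) \<longrightarrow> \<zeta> j = 0"
  shows "(\<lambda>m. pmul d c \<xi> m + \<zeta> m) \<in> stab d x"
proof -
  have x0: "\<forall>m<n. x m = 0" using mindeg_below nd by blast
  have "\<zeta> \<in> gd d" using c by (auto simp: gd_def)
  then have "\<zeta> \<in> stab d x" using high_stab x0 c by blast
  then have "pmul d c \<xi> + \<zeta> \<in> stab d x" using pmul_stab[OF xi] stab_add by blast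
  then show ?thesis by (simp add: plus_fun_def)
qed

lemma part2:
  assumes x: "x \<in> Vd d" and nd: "n = mindeg d x" and xi: "\<xi> \<in> stab d x" "mindeg d \<xi> = 0"
  shows "stab d x = {\<eta>. \<exists>c. \<exists>\<zeta>\<in>gd d. \<eta> = (\<lambda>m. pmul d c \<xi> m + zmul d (d + 1 - n) \<zeta> m)}
        \<and> (\<forall>\<eta>. \<eta> \<in> stab d x \<longleftrightarrow>
              (\<exists>!(c, \<zeta>). (\<forall>i. n + i > d \<longrightarrow> c i = 0)
                  \<and> (\<forall>j. \<zeta> j \<in> sl2) \<and> (\<forall>j. (j + n \<le> d \<or> j > d) \<longrightarrow> \<zeta> j = 0)
                  \<and> \<eta> = (\<lambda>m. pmul d c \<xi> m + \<zeta> m)))"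
proof
  have xi0: "\<xi> 0 \<noteq> 0" using xi(2) mindeg0 by blast
  have nle: "n \<le> Suc d" using nd mindeg_le by simp
  show "stab d x = {\<eta>. \<exists>c. \<exists>\<zeta>\<in>gd d. \<eta> = (\<lambda>m. pmul d c \<xi> m + zmul d (d + 1 - n) \<zeta> m)}"
  proof
    show "stab d x \<subseteq> {\<eta>. \<exists>c. \<exists>\<zeta>\<in>gd d. \<eta> = (\<lambda>m. pmul d c \<xi> m + zmul d (d + 1 - n) \<zeta> m)}"
    proof
      fix \<eta> assume eta: "\<eta> \<in> stab d x"
      obtain c \<zeta> where r: "\<forall>j. \<zeta> j \<in> sl2" "\<forall>j. (j + n \<le> d \<or> j > d) \<longrightarrow> \<zeta> j = 0"
         "\<eta> = (\<lambda>m. pmul d c \<xi> m + \<zeta> m)"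
        using repr[OF x nd xi(1) xi0 eta] by blast
      define \<zeta>'' where "\<zeta>'' = (\<lambda>m. \<zeta> (m + (d + 1 - n)))"
      have g: "\<zeta>'' \<in> gd d" using r by (auto simp: gd_def \<zeta>''_def)
      have zm: "zmul d (d + 1 - n) \<zeta>'' = \<zeta>"
      proof
        fix m show "zmul d (d + 1 - n) \<zeta>'' m = \<zeta> m"
        proof (cases "d + 1 - n \<le> m \<and> m \<le> d")
          case True then show ?thesis by (simp add: zmul_def \<zeta>''_def)
        next
          case False
          then have "m + n \<le> d \<or> d < m" using nle by auto
          then have "\<zeta> m = 0" using r(2) by blast
          then show ?thesis using False by (auto simp: zmul_def)
        qed
      qed
      have "\<eta> = (\<lambda>m. pmul d c \<xi> m + zmul d (d + 1 - n) \<zeta>'' m)" unfolding zm by (rule r(3))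
      then show "\<eta> \<in> {\<eta>. \<exists>c. \<exists>\<zeta>\<in>gd d. \<eta> = (\<lambda>m. pmul d c \<xi> m + zmul d (d + 1 - n) \<zeta> m)}"
        using g by blast
    qed
    show "{\<eta>. \<exists>c. \<exists>\<zeta>\<in>gd d. \<eta> = (\<lambda>m. pmul d c \<xi> m + zmul d (d + 1 - n) \<zeta> m)} \<subseteq> stab d x"
    proof
      fix \<eta> assume "\<eta> \<in> {\<eta>. \<exists>c. \<exists>\<zeta>\<in>gd d. \<eta> = (\<lambda>m. pmul d c \<xi> m + zmul d (d + 1 - n) \<zeta> m)}"
      then obtain c \<zeta> where z: "\<zeta> \<in> gd d" "\<eta> = (\<lambda>m. pmul d c \<xi> m + zmul d (d + 1 - n) \<zeta> m)" by auto
      have "\<forall>j. zmul d (d + 1 - n) \<zeta> j \<in> sl2" using z by (auto simp: zmul_def gd_def sl2_0)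
      moreover have "\<forall>j. (j + n \<le> d \<or> j > d) \<longrightarrow> zmul d (d + 1 - n) \<zeta> j = 0" by (auto simp: zmul_def)
      ultimately show "\<eta> \<in> stab d x" using repr_stab[OF x nd xi(1)] z(2) by blast
    qed
  qed
  show "\<forall>\<eta>. \<eta> \<in> stab d x \<longleftrightarrow>
              (\<exists>!(c, \<zeta>). (\<forall>i. n + i > d \<longrightarrow> c i = 0)
                  \<and> (\<forall>j. \<zeta> j \<in> sl2) \<and> (\<forall>j. (j + n \<le> d \<or> j > d) \<longrightarrow> \<zeta> j = 0)
                  \<and> \<eta> = (\<lambda>m. pmul d c \<xi> m + \<zeta> m))"
  proof (intro allI iffI)
    fix \<eta> assume eta: "\<eta> \<in> stab d x"
    obtain c \<zeta> where r: "\<forall>i. n + i > d \<longrightarrow> c i = 0" "\<forall>j. \<zeta> j \<in> sl2" "\<forall>j. (j + n \<le> d \<or> j > d) \<longrightarrow> \<zeta> j = 0"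
         "\<eta> = (\<lambda>m. pmul d c \<xi> m + \<zeta> m)"
      using repr[OF x nd xi(1) xi0 eta] by blast
    show "\<exists>!(c, \<zeta>). (\<forall>i. n + i > d \<longrightarrow> c i = 0)
                  \<and> (\<forall>j. \<zeta> j \<in> sl2) \<and> (\<forall>j. (j + n \<le> d \<or> j > d) \<longrightarrow> \<zeta> j = 0)
                  \<and> \<eta> = (\<lambda>m. pmul d c \<xi> m + \<zeta> m)"
    proof (rule ex1I[of _ "(c, \<zeta>)"])
      show "case (c, \<zeta>) of (c, \<zeta>) \<Rightarrow> (\<forall>i. n + i > d \<longrightarrow> c i = 0)
                  \<and> (\<forall>j. \<zeta> j \<in> sl2) \<and> (\<forall>j. (j + n \<le> d \<or> j > d) \<longrightarrow> \<zeta> j = 0)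
                  \<and> \<eta> = (\<lambda>m. pmul d c \<xi> m + \<zeta> m)" using r by simp
    next
      fix p assume "case p of (c, \<zeta>) \<Rightarrow> (\<forall>i. n + i > d \<longrightarrow> c i = 0)
                  \<and> (\<forall>j. \<zeta> j \<in> sl2) \<and> (\<forall>j. (j + n \<le> d \<or> j > d) \<longrightarrow> \<zeta> j = 0)
                  \<and> \<eta> = (\<lambda>m. pmul d c \<xi> m + \<zeta> m)"
      moreover obtain c' \<zeta>' where p: "p = (c', \<zeta>')" by (cases p)
      ultimately have r': "\<forall>i. n + i > d \<longrightarrow> c' i = 0" "\<forall>j. (j + n \<le> d \<or> j > d) \<longrightarrow> \<zeta>' j = 0"
         "\<eta> = (\<lambda>m. pmul d c' \<xi> m + \<zeta>' m)" by auto
      have "c' = c \<and> \<zeta>' = \<zeta>" using repr_uniq[of n d \<xi> c' \<zeta>' c \<zeta>] nle xi0 r'(1,2) r(1,3) r'(3) r(4) by simp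
      then show "p = (c, \<zeta>)" using p by simp
    qed
  next
    fix \<eta> assume "\<exists>!(c, \<zeta>). (\<forall>i. n + i > d \<longrightarrow> c i = 0)
                  \<and> (\<forall>j. \<zeta> j \<in> sl2) \<and> (\<forall>j. (j + n \<le> d \<or> j > d) \<longrightarrow> \<zeta> j = 0)
                  \<and> \<eta> = (\<lambda>m. pmul d c \<xi> m + \<zeta> m)"
    then obtain c \<zeta> where "\<forall>j. \<zeta> j \<in> sl2" "\<forall>j. (j + n \<le> d \<or> j > d) \<longrightarrow> \<zeta> j = 0"
         "\<eta> = (\<lambda>m. pmul d c \<xi> m + \<zeta> m)" by auto
    then show "\<eta> \<in> stab d x" using repr_stab[OF x nd xi(1)] by blast
  qed
qed



interpretation V: vector_space vscale
  by unfold_locales (auto simp: vscale_def fun_eq_iff vec_eq_iff algebra_simps)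

lemma cdim_V: "cdim S = V.dim S"
  by (simp add: cdim_def)

lemma sum_fun_apply: "(sum f A) x = sum (\<lambda>a. f a x) A"
  by (induction A rule: infinite_finite_induct) auto

definition dl :: "nat \<Rightarrow> 2 \<Rightarrow> vel" where
  "dl m q = (\<lambda>k. if k = m then axis q 1 else 0)"

lemma dl_comp: "dl m q k $ p = (if k = m \<and> p = q then 1 else 0)"
  by (auto simp: dl_def axis_def)

lemma dl_inj: "inj_on (\<lambda>(m, q). dl m q) A"
proof (rule inj_onI, clarify)
  fix m q m' q' assume "dl m q = dl m' q'"
  then have "dl m q m $ q = dl m' q' m $ q" by simp
  then show "m = m' \<and> q = q'" by (auto simp: dl_comp split: if_splits)
qed

lemma dl_sum_eval:
  "(\<Sum>(m, q)\<in>{n..d} \<times> UNIV. vscale (f m q) (dl m q)) k $ p = (if n \<le> k \<and> k \<le> d then f k p else 0)"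
proof -
  have "(\<Sum>(m, q)\<in>{n..d} \<times> UNIV. vscale (f m q) (dl m q)) k $ p
      = (\<Sum>(m, q)\<in>{n..d} \<times> UNIV. f m q * (if k = m \<and> p = q then 1 else 0))"
    by (simp add: sum_fun_apply sum_component vscale_def dl_comp case_prod_beta)
  also have "\<dots> = (if n \<le> k \<and> k \<le> d then f k p else 0)"
  proof (cases "n \<le> k \<and> k \<le> d")
    case True
    have "(\<Sum>(m, q)\<in>{n..d} \<times> UNIV. f m q * (if k = m \<and> p = q then 1 else 0)) = (case (k, p) of (m, q) \<Rightarrow> f m q * (if k = m \<and> p = q then 1 else 0))"
      by (rule sum_single) (use True in \<open>auto split: if_splits\<close>)
    then show ?thesis using True by simp
  next
    case False
    then show ?thesis by (auto intro!: sum.neutral)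
  qed
  finally show ?thesis .
qed

definition Bs :: "nat \<Rightarrow> nat \<Rightarrow> vel set" where
  "Bs d n = (\<lambda>(m, q). dl m q) ` ({n..d} \<times> UNIV)"

lemma Bs_card: "card (Bs d n) = 2 * (Suc d - n)"
  unfolding Bs_def by (subst card_image[OF dl_inj]) (simp add: card_cartesian_product)

lemma Bs_indep: "V.independent (Bs d n)"
proof (rule V.independent_if_scalars_zero)
  show "finite (Bs d n)" by (simp add: Bs_def)
  fix f x assume s: "(\<Sum>x\<in>Bs d n. vscale (f x) x) = 0" and x: "x \<in> Bs d n"
  then obtain m q where mq: "m \<in> {n..d}" "x = dl m q" by (auto simp: Bs_def)
  have "(\<Sum>x\<in>Bs d n. vscale (f x) x) = (\<Sum>(m, q)\<in>{n..d} \<times> UNIV. vscale (f (dl m q)) (dl m q))"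
    unfolding Bs_def by (subst sum.reindex[OF dl_inj]) (simp add: case_prod_beta)
  then have "(\<Sum>(m, q)\<in>{n..d} \<times> UNIV. vscale (f (dl m q)) (dl m q)) m $ q = 0" using s by simp
  then show "f x = 0" using dl_sum_eval[of "\<lambda>m q. f (dl m q)" n d m q] mq by simp
qed

lemma Bs_sub: "Bs d n \<subseteq> Wn d n"
  by (auto simp: Bs_def Wn_def dl_def)

lemma Wn_span: "Wn d n \<subseteq> V.span (Bs d n)"
proof
  fix v assume v: "v \<in> Wn d n"
  have "v = (\<Sum>(m, q)\<in>{n..d} \<times> UNIV. vscale (v m $ q) (dl m q))"
  proof (intro ext iffD2[OF vec_eq_iff] allI)
    fix k p show "v k $ p = (\<Sum>(m, q)\<in>{n..d} \<times> UNIV. vscale (v m $ q) (dl m q)) k $ p"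
      using v by (simp only: dl_sum_eval[of "\<lambda>m q. v m $ q"]) (auto simp: Wn_def)
  qed
  also have "\<dots> \<in> V.span (Bs d n)"
  proof (rule V.span_sum)
    fix p assume p: "p \<in> {n..d} \<times> (UNIV :: 2 set)"
    obtain m q where mq: "p = (m, q)" by (cases p)
    then have "dl m q \<in> Bs d n" using p by (auto simp: Bs_def)
    then have "vscale (v m $ q) (dl m q) \<in> V.span (Bs d n)" by (rule V.span_scale[OF V.span_base])
    then show "(case p of (m, q) \<Rightarrow> vscale (v m $ q) (dl m q)) \<in> V.span (Bs d n)" using mq by simp
  qed
  finally show "v \<in> V.span (Bs d n)" .
qed

lemma dim_Wn: "V.dim (Wn d n) = 2 * (Suc d - n)"
proof -
  have "V.span (Bs d n) = V.span (Wn d n)"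
  proof
    show "V.span (Bs d n) \<subseteq> V.span (Wn d n)" using Bs_sub by (rule V.span_mono)
    show "V.span (Wn d n) \<subseteq> V.span (Bs d n)" using Wn_span V.span_minimal V.subspace_span by blast
  qed
  then show ?thesis using V.dim_eq_card Bs_indep Bs_card by metis
qed

lemma cdim_orbit: "x \<in> Vd d \<Longrightarrow> cdim (orbit_sp d x) = 2 * (Suc d - mindeg d x)"
  by (simp add: cdim_V orbit_Wn dim_Wn)

lemma Vs_char: "Vs d s = {x \<in> Vd d. s = 2 * (Suc d - mindeg d x)}"
  by (auto simp: Vs_def cdim_orbit)



lemma Vs_mindeg:
  assumes "n' \<le> d + 1"
  shows "Vs d (2 * (d + 1 - n')) = {x' \<in> Vd d. mindeg d x' = n'}"
proof -
  have h: "(Suc d - n' = Suc d - mindeg d x') \<longleftrightarrow> mindeg d x' = n'" for x'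
    using assms mindeg_le[of d x'] by auto
  show ?thesis by (simp add: Vs_char h)
qed

lemma mindeg_set:
  assumes "n' \<le> d + 1"
  shows "{x' \<in> Vd d. mindeg d x' = n'} =
     {x'. (\<forall>m<n'. x' m = 0) \<and> (n' \<le> d \<longrightarrow> x' n' \<noteq> 0) \<and> (\<forall>m>d. x' m = 0)}"
proof (intro set_eqI iffI)
  fix x' :: vel assume "x' \<in> {x' \<in> Vd d. mindeg d x' = n'}"
  then show "x' \<in> {x'. (\<forall>m<n'. x' m = 0) \<and> (n' \<le> d \<longrightarrow> x' n' \<noteq> 0) \<and> (\<forall>m>d. x' m = 0)}"
    using mindeg_below[of _ d x'] mindeg_nz[of d x'] by (auto simp: Vd_def)
next
  fix x' :: vel assume "x' \<in> {x'. (\<forall>m<n'. x' m = 0) \<and> (n' \<le> d \<longrightarrow> x' n' \<noteq> 0) \<and> (\<forall>m>d. x' m = 0)}"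
  then show "x' \<in> {x' \<in> Vd d. mindeg d x' = n'}"
    using mindeg_eqI[of n' d x'] assms by (auto simp: Vd_def)
qed

lemma Vs_other:
  assumes "\<forall>n'\<le>d + 1. s \<noteq> 2 * (d + 1 - n')"
  shows "Vs d s = {}"
proof -
  have "x' \<notin> Vs d s" for x'
  proof
    assume "x' \<in> Vs d s"
    then have "s = 2 * (Suc d - mindeg d x')" by (simp add: Vs_char)
    then show False using assms mindeg_le[of d x'] by auto
  qed
  then show ?thesis by blast
qed

interpretation W: vector_space "\<lambda>(c::complex) (f::nat \<Rightarrow> complex). (\<lambda>i. c * f i)"
  by unfold_locales (auto simp: fun_eq_iff algebra_simps)

definition Sn :: "nat \<Rightarrow> nat \<Rightarrow> vel set" where
  "Sn d n' = {x'. (\<forall>m<n'. x' m = 0) \<and> (n' \<le> d \<longrightarrow> x' n' \<noteq> 0) \<and> (\<forall>m>d. x' m = 0)}"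

definition cidx :: "nat \<Rightarrow> 2" where "cidx i = (if i mod 2 = 0 then 1 else 2)"

lemma setdim_lower:
  assumes "n' \<le> Suc d"
  shows "\<exists>a c r. r > 0 \<and> (\<forall>w :: nat \<Rightarrow> complex. (\<forall>i<2 * (Suc d - n'). cmod (w i - c i) < r) \<longrightarrow>
          (\<exists>x\<in>Sn d n'. \<forall>i<2 * (Suc d - n'). lin_fun d a i x = w i))"
proof (intro exI conjI allI impI)
  let ?D = "2 * (Suc d - n')"
  define a :: "nat \<Rightarrow> nat \<Rightarrow> 2 \<Rightarrow> complex" where "a i m j = (if m = n' + i div 2 \<and> j = cidx i then 1 else 0)" for i m j
  show "(1::real) > 0" by simp
  fix w :: "nat \<Rightarrow> complex" assume w: "\<forall>i<?D. cmod (w i - (\<lambda>i. 1) i) < 1"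
  define x' :: vel where "x' m = (\<chi> j. if n' \<le> m \<and> m \<le> d then w (2 * (m - n') + (if j = 1 then 0 else 1)) else 0)" for m
  show "\<exists>x\<in>Sn d n'. \<forall>i<?D. lin_fun d a i x = w i"
  proof (intro bexI allI impI)
    show "x' \<in> Sn d n'"
    proof -
      have "n' \<le> d \<Longrightarrow> w 0 \<noteq> 0"
      proof
        assume "n' \<le> d" "w 0 = 0"
        then have "cmod (w 0 - 1) < 1" using w[rule_format, of 0] by simp
        then show False using \<open>w 0 = 0\<close> by simp
      qed
      then have "n' \<le> d \<Longrightarrow> x' n' $ 1 \<noteq> 0" by (simp add: x'_def)
      then show ?thesis by (auto simp: Sn_def x'_def vec_eq_iff)
    qed
    fix i assume i: "i < ?D"
    let ?m0 = "n' + i div 2"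
    have m0: "n' \<le> ?m0" "?m0 \<le> d" using i by auto
    have inner: "(\<Sum>j\<in>UNIV. a i m j * x' m $ j) = (if m = ?m0 then x' ?m0 $ cidx i else 0)" for m
    proof (cases "m = ?m0")
      case True
      have "(\<Sum>j\<in>UNIV. a i m j * x' m $ j) = a i m (cidx i) * x' m $ cidx i"
        by (rule sum_single) (auto simp: a_def)
      then show ?thesis using True by (simp add: a_def)
    next
      case False then show ?thesis by (simp add: a_def)
    qed
    have "lin_fun d a i x' = (\<Sum>m\<le>d. (if m = ?m0 then x' ?m0 $ cidx i else 0))"
      by (simp add: lin_fun_def inner)
    also have "\<dots> = x' ?m0 $ cidx i" using m0 by simp
    also have "\<dots> = w i"
    proof (cases "i mod 2 = 0")
      case True
      then have "2 * (i div 2) = i" by auto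
      then show ?thesis using m0 True by (simp add: x'_def cidx_def)
    next
      case False
      then have "2 * (i div 2) + 1 = i" by presburger
      moreover have "(2::2) \<noteq> 1" by simp
      ultimately show ?thesis using m0 False by (simp add: x'_def cidx_def)
    qed
    finally show "lin_fun d a i x' = w i" .
  qed
qed



definition ev :: "nat \<Rightarrow> nat \<Rightarrow> complex" where "ev i = (\<lambda>l. if l = i then 1 else 0)"

lemma ev_indep: "W.independent (ev ` {..<k})"
proof (rule W.independent_if_scalars_zero)
  show "finite (ev ` {..<k})" by simp
  fix f x assume s: "(\<Sum>x\<in>ev ` {..<k}. (\<lambda>i. f x * x i)) = 0" and x: "x \<in> ev ` {..<k}"
  then obtain i0 where i0: "i0 < k" "x = ev i0" by auto
  have "(\<Sum>x\<in>ev ` {..<k}. (\<lambda>i. f x * x i)) i0 = (\<Sum>y\<in>ev ` {..<k}. f y * y i0)"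
    by (simp add: sum_fun_apply)
  also have "\<dots> = f (ev i0) * ev i0 i0"
    by (rule sum_single) (use i0 in \<open>auto simp: ev_def split: if_splits\<close>)
  finally show "f x = 0" using s i0 by (simp add: ev_def)
qed

lemma ev_card: "card (ev ` {..<k}) = k"
proof -
  have "inj_on ev {..<k}"
  proof (rule inj_onI)
    fix i j assume "ev i = ev j" then have "ev i i = ev j i" by simp
    then show "i = j" by (simp add: ev_def split: if_splits)
  qed
  then show ?thesis by (simp add: card_image)
qed

lemma setdim_upper:
  assumes n': "n' \<le> Suc d" and r: "r > 0"
    and P: "\<forall>w :: nat \<Rightarrow> complex. (\<forall>i<k. cmod (w i - c i) < r) \<longrightarrow>
          (\<exists>x\<in>Sn d n'. \<forall>i<k. lin_fun d a i x = w i)"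
  shows "k \<le> 2 * (Suc d - n')"
proof -
  define col where "col m j = (\<lambda>i. if i < k then a i m j else 0)" for m j
  define T where "T = (\<lambda>(m, j). col m j) ` ({n'..d} \<times> (UNIV :: 2 set))"
  define L where "L x = (\<lambda>i. if i < k then lin_fun d a i x else 0)" for x
  have cardT: "card T \<le> 2 * (Suc d - n')"
  proof -
    have "card T \<le> card ({n'..d} \<times> (UNIV :: 2 set))" unfolding T_def by (rule card_image_le) simp
    then show ?thesis by (simp add: card_cartesian_product)
  qed
  have LT: "L x \<in> W.span T" if x: "x \<in> Sn d n'" for x
  proof -
    have "L x = (\<Sum>(m, j)\<in>{n'..d} \<times> (UNIV :: 2 set). (\<lambda>i. x m $ j * col m j i))"
    proof
      fix i
      have "(\<Sum>(m, j)\<in>{n'..d} \<times> (UNIV :: 2 set). (\<lambda>i. x m $ j * col m j i)) i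
           = (\<Sum>(m, j)\<in>{n'..d} \<times> (UNIV :: 2 set). x m $ j * col m j i)"
        by (simp add: sum_fun_apply case_prod_beta)
      also have "\<dots> = (\<Sum>m\<in>{n'..d}. \<Sum>j\<in>UNIV. x m $ j * col m j i)"
        by (rule sum.cartesian_product[symmetric])
      also have "\<dots> = (\<Sum>m\<le>d. \<Sum>j\<in>UNIV. x m $ j * col m j i)"
      proof (rule sum.mono_neutral_left)
        show "\<forall>m\<in>{..d} - {n'..d}. (\<Sum>j\<in>UNIV. x m $ j * col m j i) = 0"
          using x by (auto simp: Sn_def)
      qed auto
      also have "\<dots> = L x i"
        by (auto simp: L_def lin_fun_def col_def mult.commute)
      finally show "L x i = (\<Sum>(m, j)\<in>{n'..d} \<times> (UNIV :: 2 set). (\<lambda>i. x m $ j * col m j i)) i" by simp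
    qed
    also have "\<dots> \<in> W.span T"
    proof (rule W.span_sum)
      fix p assume p: "p \<in> {n'..d} \<times> (UNIV :: 2 set)"
      obtain m j where mj: "p = (m, j)" by (cases p)
      then have "col m j \<in> T" using p by (auto simp: T_def)
      then have "(\<lambda>i. x m $ j * col m j i) \<in> W.span T" by (rule W.span_scale[OF W.span_base])
      then show "(case p of (m, j) \<Rightarrow> (\<lambda>i. x m $ j * col m j i)) \<in> W.span T" using mj by simp
    qed
    finally show ?thesis .
  qed
  have "ev i0 \<in> W.span T" if i0: "i0 < k" for i0
  proof -
    obtain x1 where x1: "x1 \<in> Sn d n'" "\<forall>i<k. lin_fun d a i x1 = c i" using P r by force
    define w2 where "w2 = (\<lambda>i. c i + of_real (r/2) * ev i0 i)"
    have "\<forall>i<k. cmod (w2 i - c i) < r" using r by (auto simp: w2_def ev_def)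
    then obtain x2 where x2: "x2 \<in> Sn d n'" "\<forall>i<k. lin_fun d a i x2 = w2 i" using P by blast
    have "ev i0 = (\<lambda>i. of_real (2/r) * (L x2 - L x1) i)"
    proof
      fix i show "ev i0 i = of_real (2/r) * (L x2 - L x1) i"
        using x1 x2 r i0 by (auto simp: L_def w2_def ev_def)
    qed
    also have "\<dots> \<in> W.span T"
      by (rule W.span_scale) (intro W.span_diff LT x1 x2)
    finally show ?thesis .
  qed
  then have "ev ` {..<k} \<subseteq> W.span T" by auto
  then have "card (ev ` {..<k}) \<le> card T"
    using W.independent_span_bound[of T "ev ` {..<k}"] ev_indep by (simp add: T_def)
  then show ?thesis using ev_card cardT by simp
qed

lemma setdim_Sn:
  assumes "n' \<le> Suc d"
  shows "setdim d (Sn d n') = 2 * (Suc d - n')"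
  unfolding setdim_def
proof (rule cSup_eq_maximum)
  show "2 * (Suc d - n') \<in> {k. \<exists>a c r. r > 0 \<and> (\<forall>w :: nat \<Rightarrow> complex. (\<forall>i<k. cmod (w i - c i) < r) \<longrightarrow>
          (\<exists>x\<in>Sn d n'. \<forall>i<k. lin_fun d a i x = w i))}"
    using setdim_lower[OF assms] by simp
  fix k assume "k \<in> {k. \<exists>a c r. r > 0 \<and> (\<forall>w :: nat \<Rightarrow> complex. (\<forall>i<k. cmod (w i - c i) < r) \<longrightarrow>
          (\<exists>x\<in>Sn d n'. \<forall>i<k. lin_fun d a i x = w i))}"
  then show "k \<le> 2 * (Suc d - n')" using setdim_upper[OF assms] by blast
qed



lemma Vs_Sn: "n' \<le> d + 1 \<Longrightarrow> Vs d (2 * (d + 1 - n')) = Sn d n'"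
  using Vs_mindeg mindeg_set by (simp add: Sn_def)

lemma Vs_nonempty_eq:
  assumes "Vs d s \<noteq> {}"
  shows "int (setdim d (Vs d s)) - int s = 0"
proof -
  obtain x' where "x' \<in> Vs d s" using assms by blast
  then have s: "s = 2 * (d + 1 - mindeg d x')" by (simp add: Vs_char)
  have le: "mindeg d x' \<le> d + 1" using mindeg_le by simp
  have "setdim d (Vs d s) = s" using s Vs_Sn[OF le] setdim_Sn le by simp
  then show ?thesis by simp
qed

lemma modality0: "modality d = 0"
proof -
  have "Vs d (2 * (d + 1 - 0)) \<noteq> {}"
  proof -
    define e :: vel where "e = (\<lambda>m. if m = 0 then axis 1 1 else 0)"
    have "e \<in> Sn d 0" by (simp add: Sn_def e_def)
    then show ?thesis using Vs_Sn[of 0 d] by auto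
  qed
  then have ne: "Vs d (2 * (d + 1)) \<noteq> {}" by simp
  have "(\<lambda>s. int (setdim d (Vs d s)) - int s) ` {s. Vs d s \<noteq> {}} = {0}"
  proof
    show "(\<lambda>s. int (setdim d (Vs d s)) - int s) ` {s. Vs d s \<noteq> {}} \<subseteq> {0}"
      using Vs_nonempty_eq by auto
    show "{0} \<subseteq> (\<lambda>s. int (setdim d (Vs d s)) - int s) ` {s. Vs d s \<noteq> {}}"
      using ne Vs_nonempty_eq[OF ne] by (auto intro!: image_eqI[of _ _ "2 * (d + 1)"])
  qed
  then show ?thesis by (simp add: modality_def)
qed

theorem proposition3p3:
  fixes d :: nat and x :: vel
  assumes "x \<in> Vd d"
  defines "n \<equiv> mindeg d x"
  shows "(\<exists>\<xi>\<in>stab d x. mindeg d \<xi> = 0)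
    \<and> (\<forall>\<xi>\<in>stab d x. mindeg d \<xi> = 0 \<longrightarrow>
          stab d x = {\<eta>. \<exists>c. \<exists>\<zeta>\<in>gd d. \<eta> = (\<lambda>m. pmul d c \<xi> m + zmul d (d + 1 - n) \<zeta> m)}
        \<and> (\<forall>\<eta>. \<eta> \<in> stab d x \<longleftrightarrow>
              (\<exists>!(c, \<zeta>). (\<forall>i. n + i > d \<longrightarrow> c i = 0)
                  \<and> (\<forall>j. \<zeta> j \<in> sl2) \<and> (\<forall>j. (j + n \<le> d \<or> j > d) \<longrightarrow> \<zeta> j = 0)
                  \<and> \<eta> = (\<lambda>m. pmul d c \<xi> m + \<zeta> m))))
    \<and> (\<forall>n'\<le>d + 1.
          Vs d (2 * (d + 1 - n')) = {x' \<in> Vd d. mindeg d x' = n'}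
        \<and> Vs d (2 * (d + 1 - n')) =
            {x'. (\<forall>m<n'. x' m = 0) \<and> (n' \<le> d \<longrightarrow> x' n' \<noteq> 0) \<and> (\<forall>m>d. x' m = 0)})
    \<and> (\<forall>s. (\<forall>n'\<le>d + 1. s \<noteq> 2 * (d + 1 - n')) \<longrightarrow> Vs d s = {})
    \<and> modality d = 0
    \<and> (\<forall>s. Vs d s \<noteq> {} \<longrightarrow> int (setdim d (Vs d s)) - int s = 0)"
proof -
  have nd: "n = mindeg d x" by (simp add: n_def)
  show ?thesis
  proof (intro conjI allI impI ballI)
    show "\<exists>\<xi>\<in>stab d x. mindeg d \<xi> = 0" by (rule stab_exists[OF assms(1)])
  next
    fix \<xi> assume "\<xi> \<in> stab d x" "mindeg d \<xi> = 0"
    note p = part2[OF assms(1) nd this]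
    show "stab d x = {\<eta>. \<exists>c. \<exists>\<zeta>\<in>gd d. \<eta> = (\<lambda>m. pmul d c \<xi> m + zmul d (d + 1 - n) \<zeta> m)}"
      by (rule p[THEN conjunct1])
    fix \<eta>
    show "\<eta> \<in> stab d x \<longleftrightarrow> (\<exists>!(c, \<zeta>). (\<forall>i. n + i > d \<longrightarrow> c i = 0)
                  \<and> (\<forall>j. \<zeta> j \<in> sl2) \<and> (\<forall>j. (j + n \<le> d \<or> j > d) \<longrightarrow> \<zeta> j = 0)
                  \<and> \<eta> = (\<lambda>m. pmul d c \<xi> m + \<zeta> m))" by (rule p[THEN conjunct2, rule_format])
  next
    fix n' :: nat assume "n' \<le> d + 1"
    then show "Vs d (2 * (d + 1 - n')) = {x' \<in> Vd d. mindeg d x' = n'}" by (rule Vs_mindeg)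
    show "Vs d (2 * (d + 1 - n')) = {x'. (\<forall>m<n'. x' m = 0) \<and> (n' \<le> d \<longrightarrow> x' n' \<noteq> 0) \<and> (\<forall>m>d. x' m = 0)}"
      using Vs_Sn[OF \<open>n' \<le> d + 1\<close>] by (simp add: Sn_def)
  next
    fix s :: nat assume "\<forall>n'\<le>d + 1. s \<noteq> 2 * (d + 1 - n')"
    then show "Vs d s = {}" by (rule Vs_other)
  next
    show "modality d = 0" by (rule modality0)
  next
    fix s assume "Vs d s \<noteq> {}"
    then show "int (setdim d (Vs d s)) - int s = 0" by (rule Vs_nonempty_eq)
  qed
qed

end
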